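(* Let $G$ be a plane graph with maximum degree $\Delta\ge 2$. Then $\pi_{fl}(G)\le \lceil \Delta + 4\sqrt{\Delta}+3\rceil$.
   Context: A plane graph is a planar graph with a fixed embedding in the plane. A facial path is a path whose vertices are consecutive vertices on the boundary walk of some face. A $2j$-repetition is a path $v_1\dots v_{2j}$ with $c(v_i)=c(v_{i+j})$ for $1\le i\le j$. A vertex-coloring is facially non-repetitive if no facial path is a repetition. $\pi_{fl}(G)$, the facial Thue choice number, is the minimum $k$ such that for every assignment of lists of size at least $k$ to the vertices, $G$ has a facially non-repetitive coloring with each vertex colored from its list. *)

theory Defs
  imports Complex_Main
begin

text \<open>A plane graph is represented combinatorially: a finite simple graph (vertex set V,
symmetric irreflexive adjacency E) together with a rotation system rot, where rot u is a
cyclic permutation of the neighbours of u (the clockwise order of the edges around u in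
the embedding). Boundary walks of faces are the orbits of the face-tracing map on darts.
The rotation system comes from an embedding in the plane iff every connected component
with at least one edge satisfies Euler's formula V - E + F = 2 (genus 0).\<close>

definition nbrs :: "('v \<Rightarrow> 'v \<Rightarrow> bool) \<Rightarrow> 'v \<Rightarrow> 'v set" where
  "nbrs E u = {w. E u w}"

definition degree :: "('v \<Rightarrow> 'v \<Rightarrow> bool) \<Rightarrow> 'v \<Rightarrow> nat" where
  "degree E u = card (nbrs E u)"

definition max_degree :: "'v set \<Rightarrow> ('v \<Rightarrow> 'v \<Rightarrow> bool) \<Rightarrow> nat" where
  "max_degree V E = Max (degree E ` V)"

definition darts :: "('v \<Rightarrow> 'v \<Rightarrow> bool) \<Rightarrow> ('v \<times> 'v) set" where
  "darts E = {(u, v). E u v}"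

definition face_succ :: "('v \<Rightarrow> 'v \<Rightarrow> 'v) \<Rightarrow> 'v \<times> 'v \<Rightarrow> 'v \<times> 'v" where
  "face_succ rot d = (snd d, rot (snd d) (fst d))"

definition face_orbit :: "('v \<Rightarrow> 'v \<Rightarrow> 'v) \<Rightarrow> 'v \<times> 'v \<Rightarrow> ('v \<times> 'v) set" where
  "face_orbit rot d = {(face_succ rot ^^ k) d | k. True}"

definition component :: "('v \<Rightarrow> 'v \<Rightarrow> bool) \<Rightarrow> 'v \<Rightarrow> 'v set" where
  "component E v = {w. E\<^sup>*\<^sup>* v w}"

definition comp_edges :: "('v \<Rightarrow> 'v \<Rightarrow> bool) \<Rightarrow> 'v set \<Rightarrow> 'v set set" where
  "comp_edges E C = {{x, y} | x y. E x y \<and> x \<in> C}"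

definition comp_faces :: "('v \<Rightarrow> 'v \<Rightarrow> bool) \<Rightarrow> ('v \<Rightarrow> 'v \<Rightarrow> 'v) \<Rightarrow> 'v set
    \<Rightarrow> ('v \<times> 'v) set set" where
  "comp_faces E rot C = {face_orbit rot d | d. d \<in> darts E \<and> fst d \<in> C}"

definition plane_graph :: "'v set \<Rightarrow> ('v \<Rightarrow> 'v \<Rightarrow> bool) \<Rightarrow> ('v \<Rightarrow> 'v \<Rightarrow> 'v) \<Rightarrow> bool" where
  "plane_graph V E rot \<longleftrightarrow>
     finite V \<and>
     (\<forall>u v. E u v \<longrightarrow> u \<in> V \<and> v \<in> V) \<and>
     (\<forall>u v. E u v \<longrightarrow> E v u) \<and>
     (\<forall>u. \<not> E u u) \<and>
     (\<forall>u\<in>V. bij_betw (rot u) (nbrs E u) (nbrs E u) \<and>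
        (\<forall>w\<in>nbrs E u. \<forall>w'\<in>nbrs E u. \<exists>k. (rot u ^^ k) w = w')) \<and>
     (\<forall>v\<in>V. nbrs E v \<noteq> {} \<longrightarrow>
        card (component E v) + card (comp_faces E rot (component E v))
          = card (comp_edges E (component E v)) + 2)"

definition facial_path :: "'v set \<Rightarrow> ('v \<Rightarrow> 'v \<Rightarrow> bool) \<Rightarrow> ('v \<Rightarrow> 'v \<Rightarrow> 'v) \<Rightarrow> 'v list \<Rightarrow> bool" where
  "facial_path V E rot vs \<longleftrightarrow>
     vs \<noteq> [] \<and> set vs \<subseteq> V \<and> distinct vs \<and>
     (\<exists>d \<in> darts E. \<forall>i. Suc i < length vs \<longrightarrow>
         (face_succ rot ^^ i) d = (vs ! i, vs ! Suc i))"

definition is_repetition :: "('v \<Rightarrow> 'c) \<Rightarrow> 'v list \<Rightarrow> bool" where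
  "is_repetition c vs \<longleftrightarrow>
     (\<exists>j\<ge>1. length vs = 2 * j \<and> (\<forall>i<j. c (vs ! i) = c (vs ! (i + j))))"

definition facially_nonrepetitive ::
    "'v set \<Rightarrow> ('v \<Rightarrow> 'v \<Rightarrow> bool) \<Rightarrow> ('v \<Rightarrow> 'v \<Rightarrow> 'v) \<Rightarrow> ('v \<Rightarrow> 'c) \<Rightarrow> bool" where
  "facially_nonrepetitive V E rot c \<longleftrightarrow>
     (\<forall>vs. facial_path V E rot vs \<longrightarrow> \<not> is_repetition c vs)"

definition facial_thue_choosable ::
    "'c itself \<Rightarrow> 'v set \<Rightarrow> ('v \<Rightarrow> 'v \<Rightarrow> bool) \<Rightarrow> ('v \<Rightarrow> 'v \<Rightarrow> 'v) \<Rightarrow> nat \<Rightarrow> bool" where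
  "facial_thue_choosable _ V E rot k \<longleftrightarrow>
     (\<forall>L :: 'v \<Rightarrow> 'c set. (\<forall>v\<in>V. infinite (L v) \<or> k \<le> card (L v)) \<longrightarrow>
        (\<exists>c. (\<forall>v\<in>V. c v \<in> L v) \<and> facially_nonrepetitive V E rot c))"

definition facial_thue_choice_number ::
    "'c itself \<Rightarrow> 'v set \<Rightarrow> ('v \<Rightarrow> 'v \<Rightarrow> bool) \<Rightarrow> ('v \<Rightarrow> 'v \<Rightarrow> 'v) \<Rightarrow> nat" where
  "facial_thue_choice_number t V E rot = (LEAST k. facial_thue_choosable t V E rot k)"

end

theory Submission
  imports Defs "HOL-Library.FuncSet"
begin


lemma geom_id:
  fixes x :: real
  shows "(1-x)^2 * (\<Sum>j\<in>{1..M}. real j * x^(j-1)) = 1 - real (M+1) * x^M + real M * x^(M+1)"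
proof (induction M)
  case 0 then show ?case by simp
next
  case (Suc M)
  have "(\<Sum>j\<in>{1..Suc M}. real j * x^(j-1)) = (\<Sum>j\<in>{1..M}. real j * x^(j-1)) + real (Suc M) * x^M"
    by simp
  then have "(1-x)^2 * (\<Sum>j\<in>{1..Suc M}. real j * x^(j-1)) = (1-x)^2 * (\<Sum>j\<in>{1..M}. real j * x^(j-1)) + (1-x)^2 * real (Suc M) * x^M"
    by (simp add: algebra_simps)
  also have "\<dots> = 1 - real (M+1) * x^M + real M * x^(M+1) + (1-x)^2 * real (Suc M) * x^M"
    using Suc by simp
  also have "\<dots> = 1 - real (Suc M+1) * x^Suc M + real (Suc M) * x^(Suc M+1)"
    by (simp add: power2_eq_square algebra_simps)
  finally show ?case .
qed

lemma geom_bound: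
  fixes x :: real
  assumes "0 \<le> x" "x < 1"
  shows "(\<Sum>j\<in>{2..M}. real j * x^(j-1)) \<le> 1/(1-x)^2 - 1"
proof (cases "M \<ge> 1")
  case True
  have le: "real M * x^(M+1) \<le> real (M+1) * x^M"
  proof -
    have "x^(M+1) \<le> x^M" using assms by (simp add: power_le_one mult_left_le_one_le)
    then show ?thesis using assms by (intro mult_mono) auto
  qed
  have pos: "(1-x)^2 > 0" using assms by simp
  have "(\<Sum>j\<in>{1..M}. real j * x^(j-1)) \<le> 1/(1-x)^2"
    using geom_id[of x M] le pos by (simp add: field_simps)
  moreover have "{1..M} = insert 1 {2..M}" using True by auto
  ultimately show ?thesis by simp
next
  case False
  then have "{2..M} = {}" by auto
  moreover have "1 \<le> 1/(1-x)^2" using assms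
    by (simp add: power_le_one field_simps)
  ultimately show ?thesis by simp
qed

lemma numeric:
  fixes D :: real
  assumes "D > 0"
  defines "s \<equiv> sqrt D"
  defines "\<beta> \<equiv> 2*s+1"
  shows "\<beta> + D + D * (\<Sum>j\<in>{2..M}. 2 * real j * (1/\<beta>)^(j-1)) \<le> D + 4*s + 3"
proof -
  have s: "s > 0" "s*s = D" using assms by (auto simp: s_def)
  have b: "\<beta> > 1" using s by (simp add: \<beta>_def)
  have x: "0 \<le> 1/\<beta>" "1/\<beta> < 1" using b by auto
  have "(\<Sum>j\<in>{2..M}. 2 * real j * (1/\<beta>)^(j-1)) = 2 * (\<Sum>j\<in>{2..M}. real j * (1/\<beta>)^(j-1))"
    by (simp add: sum_distrib_left mult.assoc)
  also have "\<dots> \<le> 2 * (1/(1-1/\<beta>)^2 - 1)" using geom_bound[OF x, of M] by (intro mult_left_mono) auto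
  also have "1/(1-1/\<beta>)^2 = \<beta>^2/(4*s*s)"
    using b s by (simp add: field_simps \<beta>_def power2_eq_square)
  finally have "D * (\<Sum>j\<in>{2..M}. 2 * real j * (1/\<beta>)^(j-1)) \<le> D * (2 * (\<beta>^2/(4*s*s) - 1))"
    using assms by (simp add: mult_left_mono)
  also have "\<dots> = (4*s+1)/2" using s by (simp add: s(2)[symmetric] \<beta>_def field_simps power2_eq_square)
  finally show ?thesis by (simp add: \<beta>_def)
qed




locale fpg =
  fixes V :: "'v set" and E :: "'v \<Rightarrow> 'v \<Rightarrow> bool" and rot :: "'v \<Rightarrow> 'v \<Rightarrow> 'v"
  assumes pg: "plane_graph V E rot"
begin

lemma finV: "finite V" using pg by (simp add: plane_graph_def)
lemma E_V: "E u w \<Longrightarrow> u \<in> V \<and> w \<in> V" using pg by (simp add: plane_graph_def)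
lemma E_sym: "E u w \<Longrightarrow> E w u" using pg by (simp add: plane_graph_def)
lemma E_irr: "\<not> E u u" using pg by (simp add: plane_graph_def)
lemma rot_bij: "u \<in> V \<Longrightarrow> bij_betw (rot u) (nbrs E u) (nbrs E u)"
  using pg by (simp add: plane_graph_def)

lemma nbrs_sub: "nbrs E u \<subseteq> V" using E_V by (auto simp: nbrs_def)
lemma finite_nbrs: "finite (nbrs E u)" using nbrs_sub finV finite_subset by blast

lemma fs_darts: "d \<in> darts E \<Longrightarrow> face_succ rot d \<in> darts E"
proof -
  assume "d \<in> darts E"
  then obtain u w where d: "d = (u,w)" "E u w" by (auto simp: darts_def)
  then have "w \<in> V" "u \<in> nbrs E w" using E_V E_sym by (auto simp: nbrs_def)
  then have "rot w u \<in> nbrs E w" using rot_bij bij_betw_apply by metis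
  then show ?thesis using d by (simp add: face_succ_def darts_def nbrs_def)
qed

lemma fs_inj: "inj_on (face_succ rot) (darts E)"
proof (rule inj_onI)
  fix d d' assume d: "d \<in> darts E" "d' \<in> darts E" "face_succ rot d = face_succ rot d'"
  obtain u w where d1: "d = (u,w)" "E u w" using d by (auto simp: darts_def)
  obtain u' w' where d2: "d' = (u',w')" "E u' w'" using d by (auto simp: darts_def)
  have ww: "w = w'" and r: "rot w u = rot w u'" using d(3) d1 d2 by (auto simp: face_succ_def)
  have "w \<in> V" "u \<in> nbrs E w" "u' \<in> nbrs E w" using d1 d2 ww E_V E_sym by (auto simp: nbrs_def)
  then have "u = u'" using r rot_bij bij_betw_imp_inj_on inj_onD by metis
  then show "d = d'" using d1 d2 ww by simp
qed

lemma fsp_darts: "d \<in> darts E \<Longrightarrow> (face_succ rot ^^ n) d \<in> darts E"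
  by (induction n) (auto simp: fs_darts)

lemma fsp_inj: "inj_on (face_succ rot ^^ n) (darts E)"
proof (induction n)
  case 0 then show ?case by simp
next
  case (Suc n)
  have "inj_on (face_succ rot) ((face_succ rot ^^ n) ` darts E)"
    using fs_inj by (rule inj_on_subset) (auto simp: fsp_darts)
  then show ?case using Suc comp_inj_on[of "face_succ rot ^^ n" "darts E" "face_succ rot"] by (simp add: comp_def)
qed

lemma fp_det:
  assumes "d \<in> darts E" "\<forall>i. Suc i < length vs \<longrightarrow> (face_succ rot ^^ i) d = (vs ! i, vs ! Suc i)"
    "\<forall>i. Suc i < length ws \<longrightarrow> (face_succ rot ^^ i) d = (ws ! i, ws ! Suc i)"
    "length vs = length ws" "length vs \<ge> 2"
  shows "vs = ws"
proof (rule nth_equalityI)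
  show "length vs = length ws" by fact
  fix i assume i: "i < length vs"
  show "vs ! i = ws ! i"
  proof (cases "Suc i < length vs")
    case True
    then show ?thesis using assms(2,3,4) by (metis fst_conv)
  next
    case False
    then have "i = Suc (i - 1)" "Suc (i-1) < length vs" using i assms(5) by auto
    then show ?thesis using assms(2,3,4) by (metis snd_conv)
  qed
qed

lemma fp_edge:
  assumes "facial_path V E rot vs" "Suc i < length vs"
  shows "E (vs ! i) (vs ! Suc i)"
proof -
  obtain d where "d \<in> darts E" "\<forall>i. Suc i < length vs \<longrightarrow> (face_succ rot ^^ i) d = (vs ! i, vs ! Suc i)"
    using assms(1) by (auto simp: facial_path_def)
  then have "(vs ! i, vs ! Suc i) \<in> darts E" using assms(2) fsp_darts by metis
  then show ?thesis by (simp add: darts_def)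
qed

lemma paths_card:
  assumes "j \<ge> 1"
  shows "finite {vs. facial_path V E rot vs \<and> length vs = 2*j \<and> v \<in> set vs}
    \<and> card {vs. facial_path V E rot vs \<and> length vs = 2*j \<and> v \<in> set vs} \<le> 2*j*degree E v"
proof -
  let ?P = "{vs. facial_path V E rot vs \<and> length vs = 2*j \<and> v \<in> set vs}"
  have fin: "finite ?P"
    by (rule finite_subset[OF _ finite_lists_length_eq[OF finV, of "2*j"]])
       (auto simp: facial_path_def)
  define pos where "pos vs = (SOME p. p < length vs \<and> vs ! p = v)" for vs :: "'v list"
  have pos: "pos vs < length vs \<and> vs ! pos vs = v" if "v \<in> set vs" for vs
    unfolding pos_def using that by (rule someI_ex[OF iffD1[OF in_set_conv_nth]])
  define f where "f vs = (pos vs, if Suc (pos vs) < length vs then vs ! Suc (pos vs) else vs ! (pos vs - 1))"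
    for vs
  have img: "f ` ?P \<subseteq> {..<2*j} \<times> nbrs E v"
  proof
    fix y assume "y \<in> f ` ?P"
    then obtain vs where vs: "vs \<in> ?P" "y = f vs" by auto
    have p: "pos vs < 2*j" "vs ! pos vs = v" using pos[of vs] vs by auto
    show "y \<in> {..<2*j} \<times> nbrs E v"
    proof (cases "Suc (pos vs) < length vs")
      case True
      then show ?thesis using fp_edge[of vs "pos vs"] vs p by (auto simp: f_def nbrs_def)
    next
      case False
      have "pos vs \<ge> 1" using False assms vs by auto
      then have "Suc (pos vs - 1) < length vs" "Suc (pos vs - 1) = pos vs" using vs p by auto
      then have "E (vs ! (pos vs - 1)) v" using fp_edge[of vs "pos vs - 1"] vs p by auto
      then show ?thesis using False p vs by (auto simp: f_def nbrs_def E_sym)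
    qed
  qed
  have inj: "inj_on f ?P"
  proof (rule inj_onI)
    fix vs ws assume vs: "vs \<in> ?P" and ws: "ws \<in> ?P" and eq: "f vs = f ws"
    obtain d where d: "d \<in> darts E" "\<forall>i. Suc i < length vs \<longrightarrow> (face_succ rot ^^ i) d = (vs ! i, vs ! Suc i)"
      using vs by (auto simp: facial_path_def)
    obtain d' where d': "d' \<in> darts E" "\<forall>i. Suc i < length ws \<longrightarrow> (face_succ rot ^^ i) d' = (ws ! i, ws ! Suc i)"
      using ws by (auto simp: facial_path_def)
    have len: "length vs = length ws" "length vs \<ge> 2" using vs ws assms by auto
    have pp: "pos vs = pos ws" using eq by (simp add: f_def)
    define p where "p = pos vs"
    have pv: "vs ! p = v" "ws ! p = v" "p < length vs" using pos[of vs] pos[of ws] vs ws pp p_def by auto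
    have "d = d'"
    proof (cases "Suc p < length vs")
      case True
      then have "vs ! Suc p = ws ! Suc p" using eq len pp by (simp add: f_def p_def)
      then have "(face_succ rot ^^ p) d = (face_succ rot ^^ p) d'" using d(2) d'(2) True len pv by metis
      then show ?thesis using fsp_inj d(1) d'(1) inj_onD by metis
    next
      case False
      then have "vs ! (p-1) = ws ! (p-1)" using eq len pp by (simp add: f_def p_def)
      moreover have "Suc (p - 1) < length vs" "Suc (p-1) = p" using False len pv by auto
      ultimately have "(face_succ rot ^^ (p-1)) d = (face_succ rot ^^ (p-1)) d'"
        using d(2) d'(2) len pv by metis
      then show ?thesis using fsp_inj d(1) d'(1) inj_onD by metis
    qed
    then show "vs = ws" using fp_det[OF d(1) d(2)] d'(2) len by simp
  qed
  have "card ?P \<le> card ({..<2*j} \<times> nbrs E v)"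
    using card_inj_on_le[OF inj img] finite_nbrs by simp
  then show ?thesis using fin finite_nbrs by (simp add: card_cartesian_product degree_def)
qed

end



lemma rep_agree:
  assumes "\<forall>w\<in>set vs. c' w = c w"
  shows "is_repetition c' vs = is_repetition c vs"
proof -
  have h: "\<forall>i<length vs. c' (vs ! i) = c (vs ! i)" using assms by auto
  have *: "(\<forall>i<j. c' (vs ! i) = c' (vs ! (i + j))) = (\<forall>i<j. c (vs ! i) = c (vs ! (i + j)))"
    if "length vs = 2 * j" for j
  proof -
    have "i < j \<Longrightarrow> i < length vs \<and> i + j < length vs" for i using that by simp
    then show ?thesis using h by auto
  qed
  show ?thesis unfolding is_repetition_def using * by auto
qed

locale ctx = fpg V E rot
  for V :: "'v set" and E :: "'v \<Rightarrow> 'v \<Rightarrow> bool" and rot :: "'v \<Rightarrow> 'v \<Rightarrow> 'v" +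
  fixes L :: "'v \<Rightarrow> 'c set" and k :: nat
  assumes Lfin: "v \<in> V \<Longrightarrow> finite (L v) \<and> card (L v) = k"
begin

definition good :: "'v set \<Rightarrow> ('v \<Rightarrow> 'c) \<Rightarrow> bool" where
  "good S c \<longleftrightarrow> (\<forall>vs. facial_path V E rot vs \<and> set vs \<subseteq> S \<longrightarrow> \<not> is_repetition c vs)"

definition Col :: "'v set \<Rightarrow> ('v \<Rightarrow> 'c) set" where
  "Col S = {c \<in> Pi\<^sub>E S L. good S c}"

definition N :: "'v set \<Rightarrow> real" where
  "N S = real (card (Col S))"

lemma good_mono:
  assumes "good S c" "T \<subseteq> S" "\<forall>w\<in>T. c' w = c w"
  shows "good T c'"
  unfolding good_def
proof (intro allI impI)
  fix vs assume "facial_path V E rot vs \<and> set vs \<subseteq> T"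
  then have "\<not> is_repetition c vs" "\<forall>w\<in>set vs. c' w = c w" using assms by (auto simp: good_def)
  then show "\<not> is_repetition c' vs" using rep_agree by metis
qed

lemma finite_Col: "S \<subseteq> V \<Longrightarrow> finite (Col S)"
  unfolding Col_def using finV Lfin
  by (intro finite_subset[OF _ finite_PiE[of S L]]) (auto intro: finite_subset)

lemma N_empty: "N {} = 1"
proof -
  have "good {} (\<lambda>x. undefined)" by (auto simp: good_def facial_path_def)
  then have "Col {} = {\<lambda>x. undefined}" by (auto simp: Col_def)
  then show ?thesis by (simp add: N_def)
qed

lemma N_nonneg: "N S \<ge> 0" by (simp add: N_def)

lemma chain:
  assumes step: "\<And>S v. S \<subseteq> V \<Longrightarrow> v \<in> V \<Longrightarrow> v \<notin> S \<Longrightarrow> card S < n \<Longrightarrow> \<beta> * N S \<le> N (insert v S)"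
    and b: "\<beta> \<ge> 0"
  shows "T \<subseteq> S \<Longrightarrow> S \<subseteq> V \<Longrightarrow> card S \<le> n \<Longrightarrow> \<beta>^card (S - T) * N T \<le> N S"
proof (induction "card (S - T)" arbitrary: S)
  case 0
  have fS: "finite S" using 0 finV finite_subset by blast
  have "S - T = {}" using 0 fS by simp
  then have "S = T" using 0 by blast
  then show ?case by simp
next
  case (Suc m)
  have fS: "finite S" using Suc finV finite_subset by blast
  have "S - T \<noteq> {}" using Suc(2) by (metis card.empty nat.distinct(1))
  then obtain w where w: "w \<in> S" "w \<notin> T" by blast
  define S' where "S' = S - {w}"
  have eq: "S' - T = (S - T) - {w}" unfolding S'_def by blast
  have S'm: "card (S' - T) = m" unfolding eq using Suc(2) w fS by (simp add: card_Diff_singleton)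
  have cS: "card S' < card S" unfolding S'_def using w fS by (meson card_Diff1_less)
  have IH: "\<beta>^m * N T \<le> N S'"
    using Suc.hyps(1)[of S'] S'm cS Suc.prems w unfolding S'_def by auto
  have st: "\<beta> * N S' \<le> N (insert w S')" using step[of S' w] Suc.prems cS w unfolding S'_def by auto
  have "insert w S' = S" using w unfolding S'_def by auto
  then have "\<beta> * (\<beta>^m * N T) \<le> N S" using st IH b mult_left_mono order_trans by metis
  then show ?case using Suc(2)[symmetric] by (simp add: mult.assoc)
qed

end



context ctx begin

definition Ext :: "'v set \<Rightarrow> 'v \<Rightarrow> ('v \<Rightarrow> 'c) set" where
  "Ext S v = (\<lambda>(c,a). c(v:=a)) ` (Col S \<times> L v)"

lemma rep_len: "is_repetition x vs \<Longrightarrow> length vs = 2*j \<Longrightarrow> \<forall>i<j. x (vs ! i) = x (vs ! (i + j))"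
  unfolding is_repetition_def by auto

lemma Rbound:
  assumes S: "S \<subseteq> V" "v \<in> V" "v \<notin> S"
    and chainS: "\<And>T. T \<subseteq> S \<Longrightarrow> \<beta>^card (S - T) * N T \<le> N S"
    and b: "\<beta> \<ge> 0"
    and vs: "facial_path V E rot vs" "set vs \<subseteq> insert v S" "v \<in> set vs" "length vs = 2*j" "j \<ge> 1"
  shows "\<beta>^(j-1) * real (card {x \<in> Ext S v. is_repetition x vs}) \<le> N S"
proof -
  let ?R = "{x \<in> Ext S v. is_repetition x vs}"
  have dist: "distinct vs" using vs by (simp add: facial_path_def)
  obtain p where p: "p < length vs" "vs ! p = v" using vs(3) by (metis in_set_conv_nth)
  define W where "W = (if p < j then {..<j} else {j..<2*j})"
  define B where "B = (\<lambda>i. vs ! i) ` W"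
  define T where "T = insert v S - B"
  have W: "W \<subseteq> {..<length vs}" "card W = j" "p \<in> W" using vs p by (auto simp: W_def)
  have Bsub: "B \<subseteq> insert v S"
  proof
    fix w assume "w \<in> B"
    then obtain i where "i \<in> W" "w = vs ! i" unfolding B_def by auto
    then have "w \<in> set vs" using W(1) by auto
    then show "w \<in> insert v S" using vs(2) by blast
  qed
  have injW: "inj_on (\<lambda>i. vs ! i) W" using dist W(1) unfolding inj_on_def by (metis lessThan_iff nth_eq_iff_index_eq subsetD)
  have cB: "card B = j" unfolding B_def using card_image[OF injW] W by simp
  have vB: "v \<in> B" using W p unfolding B_def by auto
  have TS: "T \<subseteq> S" using vB unfolding T_def by auto
  have fS: "finite S" using S finV finite_subset by blast
  have STB: "S - T = B - {v}" using Bsub S(3) unfolding T_def by auto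
  have fB: "finite B" unfolding B_def using W(1) finite_subset by (metis finite_imageI finite_lessThan)
  have cST: "card (S - T) = j - 1" unfolding STB using cB vB fB by simp
  define pt where "pt i = (if i < j then i + j else i - j)" for i
  have pt: "pt i < length vs" "pt i \<notin> W" if "i \<in> W" for i
    using that vs(4) by (auto simp: pt_def W_def split: if_splits)
  have ptB: "vs ! pt i \<notin> B" if "i \<in> W" for i
  proof
    assume "vs ! pt i \<in> B"
    then obtain i' where "i' \<in> W" "vs ! pt i = vs ! i'" unfolding B_def by auto
    then have "pt i = i'" using dist pt[OF that] W(1) by (metis lessThan_iff nth_eq_iff_index_eq subsetD)
    then show False using pt[OF that] \<open>i' \<in> W\<close> by simp
  qed
  have ptT: "vs ! pt i \<in> T" if "i \<in> W" for i
    using ptB[OF that] pt[OF that] vs(2) nth_mem unfolding T_def by blast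
  have repeq: "x (vs ! i) = x (vs ! pt i)" if "is_repetition x vs" "i \<in> W" for x i
  proof -
    have r: "\<forall>i<j. x (vs ! i) = x (vs ! (i + j))" by (rule rep_len[OF that(1) vs(4)])
    show ?thesis
    proof (cases "i < j")
      case True then show ?thesis using r by (simp add: pt_def)
    next
      case False
      then have "i - j < j" "i - j + j = i" using that(2) W(1) vs(4) by auto
      then have "x (vs ! (i - j)) = x (vs ! i)" using r by metis
      moreover have "pt i = i - j" using False by (simp add: pt_def)
      ultimately show ?thesis by simp
    qed
  qed
  have extS: "x \<in> Pi\<^sub>E (insert v S) L \<and> (\<exists>c\<in>Col S. \<forall>w\<in>S. x w = c w)" if xE: "x \<in> Ext S v" for x
  proof -
    obtain c a where ca: "c \<in> Col S" "a \<in> L v" "x = c(v:=a)" using xE unfolding Ext_def by auto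
    have cP: "c \<in> Pi\<^sub>E S L" using ca(1) by (simp add: Col_def)
    have x1: "x w \<in> L w" if "w \<in> insert v S" for w
    proof (cases "w = v")
      case True then show ?thesis using ca by simp
    next
      case False then have "w \<in> S" "x w = c w" using that ca by auto
      then show ?thesis using PiE_mem[OF cP] by simp
    qed
    have x2: "x w = undefined" if "w \<notin> insert v S" for w
      using that ca PiE_arb[OF cP, of w] by simp
    have "x \<in> Pi\<^sub>E (insert v S) L" unfolding PiE_iff extensional_def using x1 x2 by blast
    moreover have "\<forall>w\<in>S. x w = c w" using ca S(3) by auto
    ultimately show ?thesis using ca by blast
  qed
  have img: "(\<lambda>x. restrict x T) ` ?R \<subseteq> Col T"
  proof
    fix y assume "y \<in> (\<lambda>x. restrict x T) ` ?R"
    then obtain x where x: "x \<in> ?R" and yx: "y = restrict x T" by blast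
    have xE: "x \<in> Ext S v" using x by simp
    from extS[OF xE] obtain c where c1: "x \<in> Pi\<^sub>E (insert v S) L"
      and c2: "c \<in> Col S" and c3: "\<forall>w\<in>S. x w = c w" by blast
    have TS': "T \<subseteq> insert v S" unfolding T_def by blast
    have "x w \<in> L w" if "w \<in> T" for w using PiE_mem[OF c1] TS' that by blast
    then have yP: "y \<in> Pi\<^sub>E T L" unfolding yx restrict_PiE_iff by blast
    have gc: "good S c" using c2 by (simp add: Col_def)
    have "y w = c w" if "w \<in> T" for w
    proof -
      have "y w = x w" using that yx by simp
      also have "\<dots> = c w" using c3 TS that by blast
      finally show ?thesis .
    qed
    then have "good T y" using good_mono[OF gc TS] by blast
    then show "y \<in> Col T" using yP by (simp add: Col_def)
  qed
  have inj: "inj_on (\<lambda>x. restrict x T) ?R"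
  proof (rule inj_onI)
    fix x y assume x: "x \<in> ?R" and y: "y \<in> ?R" and eq: "restrict x T = restrict y T"
    have xP: "x \<in> Pi\<^sub>E (insert v S) L" and yP: "y \<in> Pi\<^sub>E (insert v S) L" using extS x y by auto
    have onT: "x w = y w" if "w \<in> T" for w using eq that by (metis restrict_apply')
    show "x = y"
    proof
      fix w
      show "x w = y w"
      proof (cases "w \<in> insert v S")
        case False then show ?thesis using xP yP PiE_arb by metis
      next
        case True
        show ?thesis
        proof (cases "w \<in> B")
          case False then show ?thesis using True onT unfolding T_def by auto
        next
          case True
          then obtain i where i: "i \<in> W" "w = vs ! i" unfolding B_def by auto
          have "x w = x (vs ! pt i)" "y w = y (vs ! pt i)" using repeq[of x i] repeq[of y i] x y i by auto
          then show ?thesis using onT ptT[OF i(1)] by simp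
        qed
      qed
    qed
  qed
  have "card ?R \<le> card (Col T)"
    using card_inj_on_le[OF inj img] finite_Col TS S(1) by auto
  then have "real (card ?R) \<le> N T" by (simp add: N_def)
  then have "\<beta>^(j-1) * real (card ?R) \<le> \<beta>^(j-1) * N T" using b by (simp add: mult_left_mono)
  also have "\<dots> \<le> N S" using chainS[OF TS] cST by simp
  finally show ?thesis .
qed

end



context ctx begin

lemma finite_Ext: "S \<subseteq> V \<Longrightarrow> v \<in> V \<Longrightarrow> finite (Ext S v)"
  unfolding Ext_def using finite_Col Lfin by (intro finite_imageI finite_cartesian_product) auto

lemma card_Ext:
  assumes "S \<subseteq> V" "v \<in> V" "v \<notin> S"
  shows "card (Ext S v) = card (Col S) * k"
proof -
  have inj: "inj_on (\<lambda>(c,a). c(v:=a)) (Col S \<times> L v)"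
  proof (rule inj_onI)
    fix p q assume p: "p \<in> Col S \<times> L v" and q: "q \<in> Col S \<times> L v"
      and eq: "(\<lambda>(c,a). c(v:=a)) p = (\<lambda>(c,a). c(v:=a)) q"
    obtain c a where pa: "p = (c,a)" "c \<in> Col S" using p by auto
    obtain c' a' where qa: "q = (c',a')" "c' \<in> Col S" using q by auto
    have eq2: "c(v:=a) = c'(v:=a')" using eq pa qa by simp
    have "a = a'" using fun_cong[OF eq2, of v] by simp
    moreover have "c = c'"
    proof
      fix w show "c w = c' w"
      proof (cases "w = v")
        case True
        have "c \<in> Pi\<^sub>E S L" "c' \<in> Pi\<^sub>E S L" using pa qa by (auto simp: Col_def)
        then show ?thesis using True assms(3) PiE_arb by metis
      next
        case False then show ?thesis using fun_cong[OF eq2, of w] by simp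
      qed
    qed
    ultimately show "p = q" using pa qa by simp
  qed
  have "card (Ext S v) = card (Col S \<times> L v)" unfolding Ext_def using card_image[OF inj] .
  also have "\<dots> = card (Col S) * k" using Lfin[OF assms(2)] by (simp add: card_cartesian_product)
  finally show ?thesis .
qed

lemma main_step:
  assumes S: "S \<subseteq> V" "v \<in> V" "v \<notin> S"
    and chainS: "\<And>T. T \<subseteq> S \<Longrightarrow> \<beta>^card (S - T) * N T \<le> N S"
    and b: "\<beta> > 0"
    and deg: "\<forall>u\<in>V. degree E u \<le> \<Delta>"
    and num: "\<beta> + real \<Delta> + real \<Delta> * (\<Sum>j\<in>{2..card V}. 2 * real j * (1/\<beta>)^(j-1)) \<le> real k"
  shows "\<beta> * N S \<le> N (insert v S)"
proof -
  let ?S' = "insert v S"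
  define Bad1 where "Bad1 = (\<Union>u\<in>nbrs E v. (\<lambda>c. c(v := c u)) ` Col S)"
  define P where "P j = {vs. facial_path V E rot vs \<and> length vs = 2*j \<and> v \<in> set vs \<and> set vs \<subseteq> ?S'}" for j
  define R where "R vs = {x \<in> Ext S v. is_repetition x vs}" for vs
  define J where "J = {2..card V}"
  define U where "U = (\<Union>j\<in>J. \<Union>vs\<in>P j. R vs)"
  have S'V: "?S' \<subseteq> V" using S by auto
  have cover: "Ext S v \<subseteq> Col ?S' \<union> Bad1 \<union> U"
  proof
    fix x assume xE: "x \<in> Ext S v"
    obtain c a where ca: "c \<in> Col S" "a \<in> L v" "x = c(v:=a)" using xE unfolding Ext_def by auto
    have cP: "c \<in> Pi\<^sub>E S L" using ca(1) by (simp add: Col_def)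
    have gc: "good S c" using ca(1) by (simp add: Col_def)
    have x1: "x w \<in> L w" if "w \<in> ?S'" for w
    proof (cases "w = v")
      case True then show ?thesis using ca by simp
    next
      case False then have "w \<in> S" "x w = c w" using that ca by auto
      then show ?thesis using PiE_mem[OF cP] by simp
    qed
    have x2: "x w = undefined" if "w \<notin> ?S'" for w
      using that ca PiE_arb[OF cP, of w] by simp
    have xP: "x \<in> Pi\<^sub>E ?S' L" unfolding PiE_iff extensional_def using x1 x2 by blast
    have xc: "x w = c w" if "w \<in> S" for w using that S(3) ca(3) by auto
    show "x \<in> Col ?S' \<union> Bad1 \<union> U"
    proof (cases "good ?S' x")
      case True then show ?thesis using xP by (simp add: Col_def)
    next
      case False
      then obtain vs where vs: "facial_path V E rot vs" "set vs \<subseteq> ?S'" "is_repetition x vs"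
        unfolding good_def by blast
      have vin: "v \<in> set vs"
      proof (rule ccontr)
        assume "v \<notin> set vs"
        then have sub: "set vs \<subseteq> S" using vs(2) by blast
        then have "\<forall>w\<in>set vs. x w = c w" using xc by blast
        then have "is_repetition c vs" using vs(3) rep_agree by metis
        then show False using gc vs(1) sub unfolding good_def by blast
      qed
      obtain j where j: "j \<ge> 1" "length vs = 2*j" using vs(3) unfolding is_repetition_def by blast
      have dist: "distinct vs" using vs(1) by (simp add: facial_path_def)
      have "length vs = card (set vs)" using distinct_card[OF dist] by simp
      also have "\<dots> \<le> card V" using vs(2) S'V finV by (intro card_mono) auto
      finally have jV: "j \<le> card V" using j by simp
      show ?thesis
      proof (cases "j = 1")
        case True
        then have len: "length vs = 2" using j by simp
        then obtain p0 p1 where vsd: "vs = [p0, p1]"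
          by (metis One_nat_def Suc_1 length_0_conv length_Suc_conv)
        have eqx: "x p0 = x p1" using rep_len[OF vs(3) j(2)] True vsd by simp
        have ed: "E p0 p1" using fp_edge[OF vs(1), of 0] vsd by simp
        have neq: "p0 \<noteq> p1" using ed E_irr by metis
        have ins: "p0 \<in> ?S'" "p1 \<in> ?S'" using vs(2) vsd by auto
        have vv: "v = p0 \<or> v = p1" using vin vsd by simp
        obtain u where u: "u \<in> nbrs E v" "u \<in> S" "x v = x u"
        proof (cases "v = p0")
          case True
          then have "p1 \<in> S" using ins neq by blast
          then show ?thesis using that[of p1] ed True eqx by (simp add: nbrs_def)
        next
          case False
          then have v1: "v = p1" using vv by blast
          then have "p0 \<in> S" using ins neq by blast
          moreover have "E p1 p0" using ed E_sym by blast
          ultimately show ?thesis using that[of p0] v1 eqx by (simp add: nbrs_def)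
        qed
        have "x = c(v := c u)"
        proof
          fix w show "x w = (c(v := c u)) w"
          proof (cases "w = v")
            case True
            then show ?thesis using u(3) xc[OF u(2)] by simp
          next
            case False then show ?thesis using ca(3) by simp
          qed
        qed
        then have "x \<in> (\<lambda>c. c(v := c u)) ` Col S" using ca(1) by blast
        then have "x \<in> Bad1" unfolding Bad1_def using u(1) by blast
        then show ?thesis by blast
      next
        case False
        then have "j \<in> J" using j jV by (simp add: J_def)
        moreover have "vs \<in> P j" using vs vin j by (simp add: P_def)
        moreover have "x \<in> R vs" using xE vs(3) by (simp add: R_def)
        ultimately have "x \<in> U" unfolding U_def by blast
        then show ?thesis by blast
      qed
    qed
  qed
  have fCol: "finite (Col S)" using finite_Col S by blast
  have fCol': "finite (Col ?S')" using finite_Col S'V by blast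
  have fBad1: "finite Bad1" unfolding Bad1_def using finite_nbrs fCol by blast
  have fExt: "finite (Ext S v)" using finite_Ext S by blast
  have fU: "finite U"
  proof (rule finite_subset[OF _ fExt])
    show "U \<subseteq> Ext S v" unfolding U_def R_def by blast
  qed
  have c1: "card (Ext S v) \<le> card (Col ?S') + card Bad1 + card U"
  proof -
    have "card (Ext S v) \<le> card (Col ?S' \<union> Bad1 \<union> U)"
      using cover fCol' fBad1 fU by (intro card_mono) auto
    also have "\<dots> \<le> card (Col ?S' \<union> Bad1) + card U" by (rule card_Un_le)
    also have "\<dots> \<le> card (Col ?S') + card Bad1 + card U" using card_Un_le by simp
    finally show ?thesis .
  qed
  have cB: "card Bad1 \<le> \<Delta> * card (Col S)"
  proof -
    have "card Bad1 \<le> (\<Sum>u\<in>nbrs E v. card ((\<lambda>c. c(v := c u)) ` Col S))"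
      unfolding Bad1_def using finite_nbrs by (rule card_UN_le)
    also have "\<dots> \<le> (\<Sum>u\<in>nbrs E v. card (Col S))" by (intro sum_mono card_image_le fCol)
    also have "\<dots> = degree E v * card (Col S)" by (simp add: degree_def)
    also have "\<dots> \<le> \<Delta> * card (Col S)" using deg S(2) by simp
    finally show ?thesis .
  qed
  have fP: "finite (P j) \<and> card (P j) \<le> 2 * j * \<Delta>" if "j \<ge> 1" for j
  proof -
    have sub: "P j \<subseteq> {vs. facial_path V E rot vs \<and> length vs = 2*j \<and> v \<in> set vs}"
      unfolding P_def by blast
    have pc: "finite {vs. facial_path V E rot vs \<and> length vs = 2*j \<and> v \<in> set vs}"
      "card {vs. facial_path V E rot vs \<and> length vs = 2*j \<and> v \<in> set vs} \<le> 2*j*degree E v"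
      using paths_card[OF that] by auto
    have "card (P j) \<le> 2*j*degree E v" using card_mono[OF pc(1) sub] pc(2) by simp
    also have "\<dots> \<le> 2*j*\<Delta>" using deg S(2) by simp
    finally show ?thesis using finite_subset[OF sub pc(1)] by simp
  qed
  have Rb: "real (card (R vs)) \<le> N S * (1/\<beta>)^(j-1)" if "j \<in> J" "vs \<in> P j" for j vs
  proof -
    have vsP: "facial_path V E rot vs" "set vs \<subseteq> ?S'" "v \<in> set vs" "length vs = 2*j" "j \<ge> 1"
      using that unfolding P_def J_def by auto
    have "\<beta>^(j-1) * real (card (R vs)) \<le> N S"
      unfolding R_def using Rbound[OF S chainS _ vsP] b by simp
    then show ?thesis using b by (simp add: field_simps power_divide)
  qed
  have cU: "real (card U) \<le> (\<Sum>j\<in>J. 2 * real j * real \<Delta> * (N S * (1/\<beta>)^(j-1)))"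
  proof -
    have fJ: "finite J" by (simp add: J_def)
    have "card U \<le> (\<Sum>j\<in>J. card (\<Union>vs\<in>P j. R vs))" unfolding U_def using fJ by (rule card_UN_le)
    also have "\<dots> \<le> (\<Sum>j\<in>J. \<Sum>vs\<in>P j. card (R vs))"
      using fP by (intro sum_mono card_UN_le) (auto simp: J_def)
    finally have "real (card U) \<le> (\<Sum>j\<in>J. \<Sum>vs\<in>P j. real (card (R vs)))"
      by (metis (mono_tags, lifting) of_nat_le_iff of_nat_sum sum.cong)
    also have "\<dots> \<le> (\<Sum>j\<in>J. \<Sum>vs\<in>P j. N S * (1/\<beta>)^(j-1))"
      using Rb by (intro sum_mono) auto
    also have "\<dots> = (\<Sum>j\<in>J. real (card (P j)) * (N S * (1/\<beta>)^(j-1)))" by simp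
    also have "\<dots> \<le> (\<Sum>j\<in>J. 2 * real j * real \<Delta> * (N S * (1/\<beta>)^(j-1)))"
    proof (intro sum_mono mult_right_mono)
      fix j assume "j \<in> J"
      then have "card (P j) \<le> 2 * j * \<Delta>" using fP by (simp add: J_def)
      then show "real (card (P j)) \<le> 2 * real j * real \<Delta>" by (metis of_nat_le_iff of_nat_mult of_nat_numeral)
      show "0 \<le> N S * (1 / \<beta>) ^ (j - 1)" using b N_nonneg by simp
    qed
    finally show ?thesis .
  qed
  have "N S * real k = real (card (Ext S v))" using card_Ext[OF S] by (simp add: N_def)
  also have "\<dots> \<le> N ?S' + real \<Delta> * N S + (\<Sum>j\<in>J. 2 * real j * real \<Delta> * (N S * (1/\<beta>)^(j-1)))"
  proof -
    have "real (card (Ext S v)) \<le> real (card (Col ?S')) + real (card Bad1) + real (card U)"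
      using c1 by linarith
    moreover have "real (card Bad1) \<le> real \<Delta> * N S" using cB unfolding N_def
      by (metis of_nat_le_iff of_nat_mult)
    ultimately show ?thesis using cU unfolding N_def by linarith
  qed
  also have "(\<Sum>j\<in>J. 2 * real j * real \<Delta> * (N S * (1/\<beta>)^(j-1)))
      = N S * (real \<Delta> * (\<Sum>j\<in>J. 2 * real j * (1/\<beta>)^(j-1)))"
    by (simp add: sum_distrib_left mult_ac)
  finally have "N S * real k \<le> N ?S' + N S * (real \<Delta> + real \<Delta> * (\<Sum>j\<in>J. 2 * real j * (1/\<beta>)^(j-1)))"
    by (simp add: algebra_simps)
  moreover have "N S * (\<beta> + real \<Delta> + real \<Delta> * (\<Sum>j\<in>J. 2 * real j * (1/\<beta>)^(j-1))) \<le> N S * real k"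
    using num N_nonneg unfolding J_def by (intro mult_left_mono) auto
  ultimately show ?thesis by (simp add: algebra_simps)
qed

end



context ctx begin

lemma exists_coloring:
  assumes b: "\<beta> > 0"
    and deg: "\<forall>u\<in>V. degree E u \<le> \<Delta>"
    and num: "\<beta> + real \<Delta> + real \<Delta> * (\<Sum>j\<in>{2..card V}. 2 * real j * (1/\<beta>)^(j-1)) \<le> real k"
  shows "\<exists>c. (\<forall>v\<in>V. c v \<in> L v) \<and> facially_nonrepetitive V E rot c"
proof -
  have step: "\<forall>S v. S \<subseteq> V \<longrightarrow> v \<in> V \<longrightarrow> v \<notin> S \<longrightarrow> card S = n \<longrightarrow> \<beta> * N S \<le> N (insert v S)" for n
  proof (induction n rule: less_induct)
    case (less n)
    show ?case
    proof (intro allI impI)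
      fix S v assume S: "S \<subseteq> V" "v \<in> V" "v \<notin> S" "card S = n"
      have st: "\<And>S v. S \<subseteq> V \<Longrightarrow> v \<in> V \<Longrightarrow> v \<notin> S \<Longrightarrow> card S < n \<Longrightarrow> \<beta> * N S \<le> N (insert v S)"
        using less by blast
      have chainS: "\<And>T. T \<subseteq> S \<Longrightarrow> \<beta>^card (S - T) * N T \<le> N S"
        using chain[OF st] b S by auto
      show "\<beta> * N S \<le> N (insert v S)" using main_step[OF S(1-3) chainS b deg num] .
    qed
  qed
  have st: "\<And>S v. S \<subseteq> V \<Longrightarrow> v \<in> V \<Longrightarrow> v \<notin> S \<Longrightarrow> card S < card V \<Longrightarrow> \<beta> * N S \<le> N (insert v S)"
    using step by blast
  have "\<beta>^card (V - {}) * N {} \<le> N V" using chain[OF st, where T="{}" and S=V] b by auto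
  moreover have "\<beta>^card (V - {}) > 0" using b by simp
  ultimately have "N V > 0" using N_empty by simp
  then have "Col V \<noteq> {}" by (auto simp: N_def)
  then obtain c where c: "c \<in> Col V" by blast
  then have "c \<in> Pi\<^sub>E V L" "good V c" by (auto simp: Col_def)
  then have "\<forall>v\<in>V. c v \<in> L v" "facially_nonrepetitive V E rot c"
    by (auto simp: good_def facially_nonrepetitive_def facial_path_def PiE_mem)
  then show ?thesis by blast
qed

end

theorem theorem7:
  fixes V :: "'v set" and E :: "'v \<Rightarrow> 'v \<Rightarrow> bool" and rot :: "'v \<Rightarrow> 'v \<Rightarrow> 'v"
  assumes "plane_graph V E rot"
    and "max_degree V E \<ge> 2"
  shows "facial_thue_choice_number TYPE('c) V E rot
           \<le> nat \<lceil>real (max_degree V E) + 4 * sqrt (real (max_degree V E)) + 3\<rceil>"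
proof -
  define \<Delta> where "\<Delta> = max_degree V E"
  define k where "k = nat \<lceil>real \<Delta> + 4 * sqrt (real \<Delta>) + 3\<rceil>"
  define \<beta> where "\<beta> = 2 * sqrt (real \<Delta>) + 1"
  interpret fpg V E rot using assms(1) by unfold_locales
  have D: "real \<Delta> > 0" using assms(2) by (simp add: \<Delta>_def)
  have b: "\<beta> > 0" unfolding \<beta>_def by (simp add: add_nonneg_pos)
  have deg: "\<forall>u\<in>V. degree E u \<le> \<Delta>"
    unfolding \<Delta>_def max_degree_def using finV by (auto intro: Max_ge)
  have kk: "real \<Delta> + 4 * sqrt (real \<Delta>) + 3 \<le> real k" unfolding k_def by linarith
  have num: "\<beta> + real \<Delta> + real \<Delta> * (\<Sum>j\<in>{2..card V}. 2 * real j * (1/\<beta>)^(j-1)) \<le> real k"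
    using numeric[OF D, of "card V"] kk unfolding \<beta>_def by linarith
  have "facial_thue_choosable TYPE('c) V E rot k"
    unfolding facial_thue_choosable_def
  proof (intro allI impI)
    fix L :: "'v \<Rightarrow> 'c set"
    assume L: "\<forall>v\<in>V. infinite (L v) \<or> k \<le> card (L v)"
    define L' where "L' v = (SOME B. B \<subseteq> L v \<and> finite B \<and> card B = k)" for v
    have L': "L' v \<subseteq> L v \<and> finite (L' v) \<and> card (L' v) = k" if "v \<in> V" for v
    proof -
      have "\<exists>B. B \<subseteq> L v \<and> finite B \<and> card B = k"
      proof (cases "finite (L v)")
        case False then show ?thesis using infinite_arbitrarily_large by blast
      next
        case True then have "k \<le> card (L v)" using L that by blast
        then show ?thesis using obtain_subset_with_card_n by metis
      qed
      then show ?thesis unfolding L'_def by (rule someI_ex)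
    qed
    interpret ctx V E rot L' k using L' by unfold_locales blast
    obtain c where "\<forall>v\<in>V. c v \<in> L' v" "facially_nonrepetitive V E rot c"
      using exists_coloring[OF b deg num] by blast
    then show "\<exists>c. (\<forall>v\<in>V. c v \<in> L v) \<and> facially_nonrepetitive V E rot c"
      using L' by blast
  qed
  then show ?thesis unfolding facial_thue_choice_number_def k_def \<Delta>_def by (rule Least_le)
qed


end
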